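(* Let $n, K$ be positive integers and let $\{t_1,\dots,t_n\}$ be partitioned into $K$ nonempty true clusters $C_1,\dots,C_K$ with sizes $n_j=|C_j|$; set $n_{\min}=\min_j n_j$. Let $g^{\mathrm{True}}\in\{0,1\}^{n\times K}$ with $g^{\mathrm{True}}_{ij}=1$ iff $t_i\in C_j$, and let $g\in\{0,1\}^{n\times K}$ be any estimated assignment matrix in which each row has exactly one entry equal to $1$. Define $\bar p(C_j)=n_j/n$, $\hat p(C_j)=\frac1n\sum_{i=1}^n g_{ij}$, $$\bar{\mathcal E}=-\sum_{j=1}^K \bar p(C_j)\log \bar p(C_j),\qquad \hat{\mathcal E}=-\sum_{j=1}^K \hat p(C_j)\log \hat p(C_j)$$ (with $0\log 0=0$), and $M_{\mathrm{error}}=\sum_{j=1}^K\sum_{i=1}^n \mathbb I(g_{ij}\neq g^{\mathrm{True}}_{ij})$. Suppose there exists $0<c_2<1$ such that $2Kn_{\min}/n\ge c_2$. Then $$|\hat{\mathcal E}-\bar{\mathcal E}|\le h\!\left(\frac{2K}{c_2}\right)\left|\frac{1}{n}M_{\mathrm{error}}\right|,\qquad\text{where } h(x)=x+\log x.$$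
   Context: $\bar{\mathcal E}$ is the empirical (true-cluster) entropy and $\hat{\mathcal E}$ the entropy computed from the estimated clustering; estimated cluster $j$ is compared with true cluster $j$ (labels are aligned). $\log$ is the natural logarithm. *)

theory Defs
  imports Complex_Main
begin

definition xlogx :: "real \<Rightarrow> real" where
  "xlogx x = (if x = 0 then 0 else x * ln x)"

definition entropy :: "nat \<Rightarrow> (nat \<Rightarrow> real) \<Rightarrow> real" where
  "entropy K p = - (\<Sum>j\<in>{1..K}. xlogx (p j))"

definition hfun :: "real \<Rightarrow> real" where
  "hfun x = x + ln x"

definition gTrue :: "(nat \<Rightarrow> nat set) \<Rightarrow> nat \<Rightarrow> nat \<Rightarrow> real" where
  "gTrue C i j = (if i \<in> C j then 1 else 0)"

definition pbar :: "nat \<Rightarrow> (nat \<Rightarrow> nat set) \<Rightarrow> nat \<Rightarrow> real" where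
  "pbar n C j = real (card (C j)) / real n"

definition phat :: "nat \<Rightarrow> (nat \<Rightarrow> nat \<Rightarrow> real) \<Rightarrow> nat \<Rightarrow> real" where
  "phat n g j = (1 / real n) * (\<Sum>i\<in>{1..n}. g i j)"

definition M_error :: "nat \<Rightarrow> nat \<Rightarrow> (nat \<Rightarrow> nat set) \<Rightarrow> (nat \<Rightarrow> nat \<Rightarrow> real) \<Rightarrow> real" where
  "M_error n K C g = (\<Sum>j\<in>{1..K}. \<Sum>i\<in>{1..n}. (if g i j \<noteq> gTrue C i j then 1 else 0))"

end

theory Submission
  imports Defs
begin

lemma xl_bound:
  fixes p q :: real
  assumes p: "0 < p" "p \<le> 1" and q: "0 \<le> q" "q \<le> 1"
  shows "\<bar>xlogx q - xlogx p\<bar> \<le> (1 - ln p) * \<bar>q - p\<bar>"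
proof -
  have lp: "ln p \<le> 0" using p by simp
  consider "q = 0" | "0 < q" "q < p" | "p \<le> q" using q by linarith
  then show ?thesis
  proof cases
    case 1
    have "p * ln p \<le> 0" using p lp by (simp add: mult_nonneg_nonpos)
    moreover have "xlogx q - xlogx p = - (p * ln p)" using 1 p by (simp add: xlogx_def)
    moreover have "(1 - ln p) * \<bar>q - p\<bar> = p - p * ln p" using 1 p by (simp add: algebra_simps)
    ultimately show ?thesis using p by linarith
  next
    case 2
    have e: "xlogx q - xlogx p = (q - p) * ln p + q * ln (q / p)"
      using 2 p by (simp add: xlogx_def ln_div algebra_simps)
    have a: "q * ln (q / p) \<le> 0" using 2 p
      by (simp add: mult_nonneg_nonpos)
    have l1: "ln (p/q) \<le> p/q - 1" using 2 p by (intro ln_le_minus_one) simp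
    have l2: "ln (q/p) = - ln (p/q)" using 2 p by (simp add: ln_div)
    have "q * ln (q / p) \<ge> q * (1 - p/q)" using l1 l2 2 by (intro mult_left_mono) auto
    moreover have "q * (1 - p/q) = q - p" using 2 by (simp add: field_simps)
    ultimately have b: "q * ln (q / p) \<ge> q - p" by simp
    have d: "\<bar>q - p\<bar> = p - q" using 2 by simp
    have f1: "(q - p) * ln p \<ge> 0" using 2 lp by (simp add: mult_nonpos_nonpos)
    moreover have "(1 - ln p) * (p - q) = (p - q) + (q - p) * ln p" by (simp add: algebra_simps)
    ultimately show ?thesis unfolding d using e a b 2 by linarith
  next
    case 3
    have e: "xlogx q - xlogx p = (q - p) * ln q + p * ln (q / p)"
      using 3 p by (simp add: xlogx_def ln_div algebra_simps)
    have a: "p * ln (q / p) \<ge> 0" using 3 p by simp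
    have l1: "ln (q/p) \<le> q/p - 1" using 3 p by (intro ln_le_minus_one) simp
    have "p * ln (q / p) \<le> p * (q/p - 1)" using l1 p by (intro mult_left_mono) auto
    moreover have "p * (q/p - 1) = q - p" using p by (simp add: field_simps)
    ultimately have b: "p * ln (q / p) \<le> q - p" by simp
    have lq: "ln q \<le> 0" "ln q \<ge> ln p" using 3 p q by auto
    have c1: "(q - p) * ln q \<le> 0" using 3 lq by (simp add: mult_nonneg_nonpos)
    have c2: "(q - p) * ln q \<ge> (q - p) * ln p" using 3 lq by (simp add: mult_left_mono)
    have d: "\<bar>q - p\<bar> = q - p" using 3 by simp
    have "(q - p) * ln p \<le> xlogx q - xlogx p" using e a c2 by linarith
    moreover have "xlogx q - xlogx p \<le> q - p" using e b c1 by linarith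
    moreover have "(1 - ln p) * (q - p) = (q - p) - (q - p) * ln p" by (simp add: algebra_simps)
    moreover have "(q - p) * ln p \<le> 0" using 3 lp by (simp add: mult_nonneg_nonpos)
    ultimately show ?thesis unfolding d using 3 by linarith
  qed
qed
theorem lemma1:
  fixes n K :: nat and C :: "nat \<Rightarrow> nat set" and g :: "nat \<Rightarrow> nat \<Rightarrow> real" and c2 :: real
  assumes "n > 0" and "K > 0"
    and partition_cover: "(\<Union>j\<in>{1..K}. C j) = {1..n}"
    and partition_disj: "\<And>j j'. j \<in> {1..K} \<Longrightarrow> j' \<in> {1..K} \<Longrightarrow> j \<noteq> j' \<Longrightarrow> C j \<inter> C j' = {}"
    and nonempty: "\<And>j. j \<in> {1..K} \<Longrightarrow> C j \<noteq> {}"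
    and g_binary: "\<And>i j. i \<in> {1..n} \<Longrightarrow> j \<in> {1..K} \<Longrightarrow> g i j \<in> {0, 1}"
    and g_rows: "\<And>i. i \<in> {1..n} \<Longrightarrow> card {j \<in> {1..K}. g i j = 1} = 1"
    and "0 < c2" and "c2 < 1"
    and "2 * real K * real (Min ((\<lambda>j. card (C j)) ` {1..K})) / real n \<ge> c2"
  shows "\<bar>entropy K (phat n g) - entropy K (pbar n C)\<bar>
           \<le> hfun (2 * real K / c2) * \<bar>(1 / real n) * M_error n K C g\<bar>"
proof -
  define x where "x = 2 * real K / c2"
  define S where "S j = (\<Sum>i\<in>{1..n}. (if g i j \<noteq> gTrue C i j then 1 else 0::real))" for j
  define L where "L = hfun x"
  have Kpos: "real K \<ge> 1" using assms(2) by simp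
  have x1: "x \<ge> 1" using assms(8,9) Kpos unfolding x_def by (simp add: field_simps)
  have npos: "real n > 0" using assms(1) by simp
  have key: "\<bar>xlogx (phat n g j) - xlogx (pbar n C j)\<bar> \<le> L * ((1 / real n) * S j)"
    if j: "j \<in> {1..K}" for j
  proof -
    have sub: "C j \<subseteq> {1..n}" using partition_cover j by blast
    have cardC: "real (card (C j)) = (\<Sum>i\<in>{1..n}. gTrue C i j)"
    proof -
      have "(\<Sum>i\<in>{1..n}. gTrue C i j) = (\<Sum>i\<in>{1..n}. (if i \<in> C j then 1 else 0))"
        by (simp add: gTrue_def)
      also have "\<dots> = real (card ({1..n} \<inter> C j))"
        by (simp add: sum.If_cases)
      also have "{1..n} \<inter> C j = C j" using sub by blast
      finally show ?thesis by simp
    qed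
    have diff: "\<bar>(\<Sum>i\<in>{1..n}. g i j) - real (card (C j))\<bar> \<le> S j"
    proof -
      have "\<bar>(\<Sum>i\<in>{1..n}. g i j) - real (card (C j))\<bar> = \<bar>\<Sum>i\<in>{1..n}. (g i j - gTrue C i j)\<bar>"
        by (simp add: cardC sum_subtractf)
      also have "\<dots> \<le> (\<Sum>i\<in>{1..n}. \<bar>g i j - gTrue C i j\<bar>)" by (rule sum_abs)
      also have "\<dots> \<le> S j" unfolding S_def
      proof (rule sum_mono)
        fix i assume i: "i \<in> {1..n}"
        have "g i j \<in> {0,1}" using g_binary i j by blast
        moreover have "gTrue C i j \<in> {0,1}" by (simp add: gTrue_def)
        ultimately show "\<bar>g i j - gTrue C i j\<bar> \<le> (if g i j \<noteq> gTrue C i j then 1 else 0)"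
          by auto
      qed
      finally show ?thesis .
    qed
    have qeq: "phat n g j - pbar n C j = (1 / real n) * ((\<Sum>i\<in>{1..n}. g i j) - real (card (C j)))"
      unfolding phat_def pbar_def by (simp add: diff_divide_distrib)
    have qd: "\<bar>phat n g j - pbar n C j\<bar> \<le> (1 / real n) * S j"
      unfolding qeq using diff npos by (simp add: abs_mult divide_right_mono)
    have q0: "phat n g j \<ge> 0" unfolding phat_def using g_binary j
      by (intro mult_nonneg_nonneg sum_nonneg) (auto, fastforce)
    have "(\<Sum>i\<in>{1..n}. g i j) \<le> (\<Sum>i\<in>{1..n}. 1)"
      using g_binary j by (intro sum_mono) fastforce
    hence q1: "phat n g j \<le> 1" unfolding phat_def using npos by (simp add: field_simps)
    have fin: "finite ((\<lambda>j. card (C j)) ` {1..K})" by simp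
    have "Min ((\<lambda>j. card (C j)) ` {1..K}) \<le> card (C j)" using j fin by (intro Min_le) auto
    hence "c2 \<le> 2 * real K * real (card (C j)) / real n"
      using assms(10) npos Kpos
      by (smt (verit, best) divide_right_mono mult_left_mono of_nat_0_le_iff of_nat_mono)
    hence pa: "pbar n C j \<ge> 1 / x" unfolding pbar_def x_def using npos Kpos assms(8)
      by (simp add: field_simps)
    have "1 / x > 0" using x1 by simp
    hence p0: "pbar n C j > 0" using pa by linarith
    have "card (C j) \<le> card {1..n}" using sub by (intro card_mono) auto
    hence p1: "pbar n C j \<le> 1" unfolding pbar_def using npos by (simp add: field_simps)
    have "ln (pbar n C j) \<ge> ln (1 / x)" using pa x1 p0 by (subst ln_le_cancel_iff) auto
    hence "1 - ln (pbar n C j) \<le> 1 + ln x" using x1 by (simp add: ln_div)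
    also have "\<dots> \<le> L" unfolding L_def hfun_def using x1 by simp
    finally have Lb: "1 - ln (pbar n C j) \<le> L" .
    have "\<bar>xlogx (phat n g j) - xlogx (pbar n C j)\<bar> \<le> (1 - ln (pbar n C j)) * \<bar>phat n g j - pbar n C j\<bar>"
      by (rule xl_bound[OF p0 p1 q0 q1])
    also have "\<dots> \<le> L * ((1 / real n) * S j)"
    proof -
      have "ln (pbar n C j) \<le> 0" using p0 p1 by simp
      hence "0 \<le> L" using Lb by linarith
      thus ?thesis using Lb qd by (intro mult_mono) auto
    qed
    finally show ?thesis .
  qed
  have "\<bar>entropy K (phat n g) - entropy K (pbar n C)\<bar>
      = \<bar>\<Sum>j\<in>{1..K}. (xlogx (phat n g j) - xlogx (pbar n C j))\<bar>"
    unfolding entropy_def by (simp add: sum_subtractf abs_minus_commute)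
  also have "\<dots> \<le> (\<Sum>j\<in>{1..K}. \<bar>xlogx (phat n g j) - xlogx (pbar n C j)\<bar>)" by (rule sum_abs)
  also have "\<dots> \<le> (\<Sum>j\<in>{1..K}. L * ((1 / real n) * S j))" by (rule sum_mono) (rule key)
  also have "\<dots> = L * ((1 / real n) * M_error n K C g)"
    unfolding M_error_def S_def by (simp add: sum_distrib_left)
  also have "\<dots> = L * \<bar>(1 / real n) * M_error n K C g\<bar>"
  proof -
    have "M_error n K C g \<ge> 0" unfolding M_error_def by (intro sum_nonneg) auto
    thus ?thesis using npos by simp
  qed
  finally show ?thesis unfolding L_def x_def .
qed

end
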